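(* Let $\mathbb{K}$ be a topological field, $d\in\mathbb{N}$, $F$ a topological $\mathbb{K}$-vector space, $U\subseteq\mathbb{K}^d$ open or of the form $U_1\times\cdots\times U_d$ with $U_i\subseteq\mathbb{K}$ having dense interior, and $f\colon U\to F$. If $f$ is $C^k_{BGN}$ for some $k\in\mathbb{N}_0$, then $f$ is $C^k_{SDS}$. If $\mathbb{K}$ is a valued field, $\sigma>0$ and $f$ is $C^{k,\sigma}_{BGN}$, then $f$ is $C^{k,\sigma}_{SDS}$.
   Context: Topological fields are Hausdorff and non-discrete; vector spaces Hausdorff; a valued field carries an absolute value defining a non-discrete topology. BGN: for $V\subseteq E$ with dense interior, $V^{[1]}=\{(x,y,t)\in V\times E\times\mathbb{K}: x+ty\in V\}$, $V^{]1[}$ its subset with $t\neq0$, $g^{]1[}(x,y,t)=(g(x+ty)-g(x))/t$. $g$ is $C^0_{BGN}$ if continuous, $C^1_{BGN}$ if moreover $g^{]1[}$ extends continuously to $g^{[1]}$ on $V^{[1]}$, $C^k_{BGN}$ if $C^1_{BGN}$ with $g^{[1]}$ $C^{k-1}_{BGN}$; $g^{[k]}=(g^{[1]})^{[k-1]}$, $g^{[0]}=g$. SDS: for $\alpha\in\mathbb{N}_0^d$, write $x\in\mathbb{K}^{d+|\alpha|}$ as $(x^{(1)},\ldots,x^{(d)})$ with $x^{(i)}=(x^{(i)}_0,\ldots,x^{(i)}_{\alpha_i})$; $U^{<\alpha>}$: all $x$ with $(x^{(1)}_{i_1},\ldots,x^{(d)}_{i_d})\in U$ for all $0\le i_\ell\le\alpha_\ell$;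 $U^{>\alpha<}$: those with pairwise distinct entries within each $x^{(i)}$; $f^{>0<}=f$, $f^{>\alpha<}(x)=\sum_{j_1,\ldots,j_d}\big(\prod_{\ell}\prod_{k_\ell\neq j_\ell}(x^{(\ell)}_{j_\ell}-x^{(\ell)}_{k_\ell})^{-1}\big)f(x^{(1)}_{j_1},\ldots,x^{(d)}_{j_d})$ ($0\le j_\ell,k_\ell\le\alpha_\ell$). $f$ is $C^k_{SDS}$ if continuous and, for every $1\le|\alpha|\le k$, $f^{>\alpha<}$ has a continuous extension $f^{<\alpha>}$ to $U^{<\alpha>}$ ($f^{<0>}=f$). Hölder: a gauge on $E$ is $q\colon E\to[0,\infty[$ with $q(tx)=|t|q(x)$ and $\{q<r\}$ a $0$-neighbourhood for all $r>0$; $g\colon V\to F$ is $C^{0,\sigma}$ if for each $x_0\in V$ and gauge $q$ on $F$ there exist a gauge $p$ on $E$ and a neighbourhood $W$ of $x_0$ in $V$ with $q(g(y)-g(x))\le p(y-x)^\sigma$ on $W$. $C^{k,\sigma}_{BGN}$: $C^k_{BGN}$ with all $f^{[j]}$ ($j\le k$) $C^{0,\sigma}$; $C^{k,\sigma}_{SDS}$: $C^k_{SDS}$ with all $f^{<\alpha>}$ ($|\alpha|\le k$) $C^{0,\sigma}$. *)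

theory Defs
  imports "HOL-Analysis.Analysis"
begin

(* Conventions: K^m is represented as Km m = functions nat => 'k vanishing from index m on,
   with the (subspace of the) product topology on nat => 'k. *)

definition Km :: "nat \<Rightarrow> (nat \<Rightarrow> 'k::zero) set" where
  "Km m = {x. \<forall>i\<ge>m. x i = 0}"

definition top_field :: "'k::{field,t2_space,perfect_space} itself \<Rightarrow> bool" where
  "top_field _ \<longleftrightarrow>
     continuous_on UNIV (\<lambda>p::'k\<times>'k. fst p + snd p) \<and>
     continuous_on UNIV (\<lambda>p::'k\<times>'k. fst p * snd p) \<and>
     continuous_on UNIV (\<lambda>x::'k. - x) \<and>
     continuous_on (- {0}) (\<lambda>x::'k. inverse x)"

definition tvs :: "('k::{field,topological_space} \<Rightarrow> 'f::{ab_group_add,t2_space} \<Rightarrow> 'f) \<Rightarrow> bool" where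
  "tvs smul \<longleftrightarrow> vector_space smul \<and>
     continuous_on UNIV (\<lambda>p::'f\<times>'f. fst p + snd p) \<and>
     continuous_on UNIV (\<lambda>p::'k\<times>'f. smul (fst p) (snd p))"

definition valued_field :: "('k::{field,topological_space} \<Rightarrow> real) \<Rightarrow> bool" where
  "valued_field av \<longleftrightarrow>
     (\<forall>x. 0 \<le> av x) \<and> (\<forall>x. av x = 0 \<longleftrightarrow> x = 0) \<and>
     (\<forall>x y. av (x * y) = av x * av y) \<and> (\<forall>x y. av (x + y) \<le> av x + av y) \<and>
     (\<forall>S. open S \<longleftrightarrow> (\<forall>x\<in>S. \<exists>e>0. \<forall>y. av (y - x) < e \<longrightarrow> y \<in> S))"

definition gaugeE :: "('k::{field,topological_space} \<Rightarrow> real) \<Rightarrow> nat \<Rightarrow> ((nat \<Rightarrow> 'k) \<Rightarrow> real) \<Rightarrow> bool" where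
  "gaugeE av m p \<longleftrightarrow>
     (\<forall>x\<in>Km m. 0 \<le> p x \<and> (\<forall>t. p (\<lambda>i. t * x i) = av t * p x)) \<and>
     (\<forall>r>0. \<exists>N. open N \<and> (\<lambda>_. 0) \<in> N \<and> N \<inter> Km m \<subseteq> {x. p x < r})"

definition gaugeF :: "('k \<Rightarrow> real) \<Rightarrow> ('k \<Rightarrow> 'f::{ab_group_add,topological_space} \<Rightarrow> 'f) \<Rightarrow> ('f \<Rightarrow> real) \<Rightarrow> bool" where
  "gaugeF av smul q \<longleftrightarrow>
     (\<forall>v. 0 \<le> q v \<and> (\<forall>t. q (smul t v) = av t * q v)) \<and>
     (\<forall>r>0. \<exists>N. open N \<and> 0 \<in> N \<and> N \<subseteq> {v. q v < r})"

definition holder :: "('k::{field,topological_space} \<Rightarrow> real) \<Rightarrow> ('k \<Rightarrow> 'f::{ab_group_add,topological_space} \<Rightarrow> 'f)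
     \<Rightarrow> real \<Rightarrow> nat \<Rightarrow> (nat \<Rightarrow> 'k) set \<Rightarrow> ((nat \<Rightarrow> 'k) \<Rightarrow> 'f) \<Rightarrow> bool" where
  "holder av smul \<sigma> m V g \<longleftrightarrow>
     (\<forall>x0\<in>V. \<forall>q. gaugeF av smul q \<longrightarrow>
        (\<exists>p W. gaugeE av m p \<and> open W \<and> x0 \<in> W \<and>
           (\<forall>x\<in>V \<inter> W. \<forall>y\<in>V \<inter> W. q (g y - g x) \<le> p (\<lambda>i. y i - x i) powr \<sigma>)))"

(* V^[1] subset of K^m x K^m x K, flattened to K^(2m+1): x = coords 0..m-1, y = m..2m-1, t = 2m *)

definition xpart :: "nat \<Rightarrow> (nat \<Rightarrow> 'k::zero) \<Rightarrow> nat \<Rightarrow> 'k" where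
  "xpart m z = (\<lambda>i. if i < m then z i else 0)"

definition ypart :: "nat \<Rightarrow> (nat \<Rightarrow> 'k::zero) \<Rightarrow> nat \<Rightarrow> 'k" where
  "ypart m z = (\<lambda>i. if i < m then z (m + i) else 0)"

definition shifted :: "nat \<Rightarrow> (nat \<Rightarrow> 'k::field) \<Rightarrow> nat \<Rightarrow> 'k" where
  "shifted m z = (\<lambda>i. xpart m z i + z (2 * m) * ypart m z i)"

definition V1 :: "nat \<Rightarrow> (nat \<Rightarrow> 'k::field) set \<Rightarrow> (nat \<Rightarrow> 'k) set" where
  "V1 m V = {z \<in> Km (2 * m + 1). xpart m z \<in> V \<and> shifted m z \<in> V}"

definition V1' :: "nat \<Rightarrow> (nat \<Rightarrow> 'k::field) set \<Rightarrow> (nat \<Rightarrow> 'k) set" where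
  "V1' m V = {z \<in> V1 m V. z (2 * m) \<noteq> 0}"

definition dquot :: "('k::field \<Rightarrow> 'f::ab_group_add \<Rightarrow> 'f) \<Rightarrow> nat \<Rightarrow> ((nat \<Rightarrow> 'k) \<Rightarrow> 'f) \<Rightarrow> (nat \<Rightarrow> 'k) \<Rightarrow> 'f" where
  "dquot smul m g z = smul (inverse (z (2 * m))) (g (shifted m z) - g (xpart m z))"

fun BGN :: "('k::{field,topological_space} \<Rightarrow> 'f::{ab_group_add,topological_space} \<Rightarrow> 'f)
     \<Rightarrow> nat \<Rightarrow> nat \<Rightarrow> (nat \<Rightarrow> 'k) set \<Rightarrow> ((nat \<Rightarrow> 'k) \<Rightarrow> 'f) \<Rightarrow> bool" where
  "BGN smul 0 m V g \<longleftrightarrow> continuous_on V g"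
| "BGN smul (Suc k) m V g \<longleftrightarrow> continuous_on V g \<and>
     (\<exists>G. (\<forall>z\<in>V1' m V. G z = dquot smul m g z) \<and> BGN smul k (2 * m + 1) (V1 m V) G)"

fun BGNH :: "('k::{field,topological_space} \<Rightarrow> real) \<Rightarrow> ('k \<Rightarrow> 'f::{ab_group_add,topological_space} \<Rightarrow> 'f)
     \<Rightarrow> real \<Rightarrow> nat \<Rightarrow> nat \<Rightarrow> (nat \<Rightarrow> 'k) set \<Rightarrow> ((nat \<Rightarrow> 'k) \<Rightarrow> 'f) \<Rightarrow> bool" where
  "BGNH av smul \<sigma> 0 m V g \<longleftrightarrow> continuous_on V g \<and> holder av smul \<sigma> m V g"
| "BGNH av smul \<sigma> (Suc k) m V g \<longleftrightarrow> continuous_on V g \<and> holder av smul \<sigma> m V g \<and>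
     (\<exists>G. (\<forall>z\<in>V1' m V. G z = dquot smul m g z) \<and> BGNH av smul \<sigma> k (2 * m + 1) (V1 m V) G)"

(* alpha : nat => nat, only alpha 0..alpha (d-1) matter; |alpha| = sum.
   A point of K^(d+|alpha|) is flattened: x^(l)_j sits at index pos alpha l j. *)

definition absa :: "nat \<Rightarrow> (nat \<Rightarrow> nat) \<Rightarrow> nat" where
  "absa d \<alpha> = (\<Sum>l<d. \<alpha> l)"

definition pos :: "(nat \<Rightarrow> nat) \<Rightarrow> nat \<Rightarrow> nat \<Rightarrow> nat" where
  "pos \<alpha> l j = (\<Sum>i<l. Suc (\<alpha> i)) + j"

definition sel :: "nat \<Rightarrow> (nat \<Rightarrow> nat) \<Rightarrow> (nat \<Rightarrow> 'k::zero) \<Rightarrow> (nat \<Rightarrow> nat) \<Rightarrow> nat \<Rightarrow> 'k" where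
  "sel d \<alpha> x j = (\<lambda>l. if l < d then x (pos \<alpha> l (j l)) else 0)"

definition Ualpha :: "nat \<Rightarrow> (nat \<Rightarrow> nat) \<Rightarrow> (nat \<Rightarrow> 'k::zero) set \<Rightarrow> (nat \<Rightarrow> 'k) set" where
  "Ualpha d \<alpha> U = {x \<in> Km (d + absa d \<alpha>).
      \<forall>j. (\<forall>l<d. j l \<le> \<alpha> l) \<longrightarrow> sel d \<alpha> x j \<in> U}"

definition Ualpha' :: "nat \<Rightarrow> (nat \<Rightarrow> nat) \<Rightarrow> (nat \<Rightarrow> 'k::zero) set \<Rightarrow> (nat \<Rightarrow> 'k) set" where
  "Ualpha' d \<alpha> U = {x \<in> Ualpha d \<alpha> U.
      \<forall>l<d. \<forall>j k. j \<le> \<alpha> l \<longrightarrow> k \<le> \<alpha> l \<longrightarrow> j \<noteq> k \<longrightarrow> x (pos \<alpha> l j) \<noteq> x (pos \<alpha> l k)}"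

definition fdd :: "('k::field \<Rightarrow> 'f::ab_group_add \<Rightarrow> 'f) \<Rightarrow> nat \<Rightarrow> (nat \<Rightarrow> nat)
     \<Rightarrow> ((nat \<Rightarrow> 'k) \<Rightarrow> 'f) \<Rightarrow> (nat \<Rightarrow> 'k) \<Rightarrow> 'f" where
  "fdd smul d \<alpha> f x =
     (\<Sum>j \<in> Pi\<^sub>E {..<d} (\<lambda>l. {..\<alpha> l}).
        smul (\<Prod>l<d. \<Prod>k\<in>{..\<alpha> l} - {j l}. inverse (x (pos \<alpha> l (j l)) - x (pos \<alpha> l k)))
              (f (sel d \<alpha> x j)))"

definition SDS :: "('k::{field,topological_space} \<Rightarrow> 'f::{ab_group_add,topological_space} \<Rightarrow> 'f)
     \<Rightarrow> nat \<Rightarrow> nat \<Rightarrow> (nat \<Rightarrow> 'k) set \<Rightarrow> ((nat \<Rightarrow> 'k) \<Rightarrow> 'f) \<Rightarrow> bool" where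
  "SDS smul k d U f \<longleftrightarrow> continuous_on U f \<and>
     (\<forall>\<alpha>. 1 \<le> absa d \<alpha> \<and> absa d \<alpha> \<le> k \<longrightarrow>
        (\<exists>G. continuous_on (Ualpha d \<alpha> U) G \<and> (\<forall>x\<in>Ualpha' d \<alpha> U. G x = fdd smul d \<alpha> f x)))"

definition SDSH :: "('k::{field,topological_space} \<Rightarrow> real) \<Rightarrow> ('k \<Rightarrow> 'f::{ab_group_add,topological_space} \<Rightarrow> 'f)
     \<Rightarrow> real \<Rightarrow> nat \<Rightarrow> nat \<Rightarrow> (nat \<Rightarrow> 'k) set \<Rightarrow> ((nat \<Rightarrow> 'k) \<Rightarrow> 'f) \<Rightarrow> bool" where
  "SDSH av smul \<sigma> k d U f \<longleftrightarrow> continuous_on U f \<and> holder av smul \<sigma> d U f \<and>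
     (\<forall>\<alpha>. 1 \<le> absa d \<alpha> \<and> absa d \<alpha> \<le> k \<longrightarrow>
        (\<exists>G. continuous_on (Ualpha d \<alpha> U) G \<and> (\<forall>x\<in>Ualpha' d \<alpha> U. G x = fdd smul d \<alpha> f x) \<and>
             holder av smul \<sigma> (d + absa d \<alpha>) (Ualpha d \<alpha> U) G))"

definition admissible_dom :: "nat \<Rightarrow> (nat \<Rightarrow> 'k::{zero,topological_space}) set \<Rightarrow> bool" where
  "admissible_dom d U \<longleftrightarrow>
     (U \<subseteq> Km d \<and> openin (top_of_set (Km d)) U) \<or>
     (\<exists>Us::nat \<Rightarrow> 'k set. (\<forall>i<d. Us i \<subseteq> closure (interior (Us i))) \<and>
         U = {x \<in> Km d. \<forall>i<d. x i \<in> Us i})"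

end

theory Submission
  imports Defs
begin



definition SP :: "(nat \<Rightarrow> nat) \<Rightarrow> nat \<Rightarrow> nat" where
  "SP n i = (\<Sum>k<i. Suc (n k))"

definition blk :: "(nat \<Rightarrow> nat) \<Rightarrow> nat \<Rightarrow> nat" where
  "blk n p = (LEAST i. p < SP n (Suc i))"

definition flat :: "nat \<Rightarrow> (nat \<Rightarrow> nat) \<Rightarrow> (nat \<Rightarrow> nat \<Rightarrow> 'k::zero) \<Rightarrow> nat \<Rightarrow> 'k" where
  "flat D n Y p = (if blk n p < D then Y (blk n p) (p - SP n (blk n p)) else 0)"

lemma pos_SP: "pos n i j = SP n i + j"
  by (simp add: pos_def SP_def)

lemma SP_Suc: "SP n (Suc i) = SP n i + Suc (n i)"
  by (simp add: SP_def)

lemma SP_mono: "i \<le> i' \<Longrightarrow> SP n i \<le> SP n i'"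
  unfolding SP_def by (rule sum_mono2) auto

lemma SP_ge: "i \<le> SP n i"
proof -
  have "(\<Sum>k<i. (1::nat)) \<le> (\<Sum>k<i. Suc (n k))" by (rule sum_mono) auto
  then show ?thesis by (simp add: SP_def)
qed

lemma blk_pos: assumes "j \<le> n i" shows "blk n (SP n i + j) = i"
  unfolding blk_def
proof (rule Least_equality)
  show "SP n i + j < SP n (Suc i)" using assms by (simp add: SP_Suc)
next
  fix y assume "SP n i + j < SP n (Suc y)"
  then show "i \<le> y"
    using SP_mono[of "Suc y" i n] by (cases "i \<le> y") auto
qed

lemma flat_pos: "i < D \<Longrightarrow> j \<le> n i \<Longrightarrow> flat D n Y (pos n i j) = Y i j"
  by (simp add: flat_def pos_SP blk_pos)

lemma blk_lt: "p < SP n (Suc (blk n p))"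
  unfolding blk_def by (rule LeastI[of _ p]) (use SP_ge[of "Suc p" n] in auto)

lemma absa_SP: "D + absa D n = SP n D"
proof -
  have "(\<Sum>k<D. Suc (n k)) = (\<Sum>k<D. 1 + n k)" by simp
  also have "\<dots> = D + (\<Sum>k<D. n k)" by (simp only: sum.distrib) simp
  finally show ?thesis by (simp add: absa_def SP_def)
qed

lemma flat_Km: "flat D n Y \<in> Km (D + absa D n)"
  unfolding Km_def
proof (clarify)
  fix p assume p: "D + absa D n \<le> p"
  show "flat D n Y p = 0"
  proof (rule ccontr)
    assume "flat D n Y p \<noteq> 0"
    then have b: "blk n p < D" by (simp add: flat_def split: if_splits)
    have "p < SP n (Suc (blk n p))" by (rule blk_lt)
    also have "\<dots> \<le> SP n D" using b by (intro SP_mono) auto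
    finally show False using p absa_SP[of D n] by simp
  qed
qed

lemma flat_diff: "flat D n Y p - flat D n Z p = flat D n (\<lambda>i j. Y i j - Z i j) p"
  for Y :: "nat \<Rightarrow> nat \<Rightarrow> 'k::ab_group_add"
  by (simp add: flat_def)

lemma flat_scale: "t * flat D n Y p = flat D n (\<lambda>i j. t * Y i j) p"
  for Y :: "nat \<Rightarrow> nat \<Rightarrow> 'k::field"
  by (simp add: flat_def)

definition DD :: "('k::field \<Rightarrow> 'f::ab_group_add \<Rightarrow> 'f) \<Rightarrow> nat \<Rightarrow> (nat \<Rightarrow> nat) \<Rightarrow> (nat \<Rightarrow> nat \<Rightarrow> 'k) \<Rightarrow> ((nat \<Rightarrow> 'k) \<Rightarrow> 'f) \<Rightarrow> 'f" where
  "DD smul D n X f = (\<Sum>j\<in>Pi\<^sub>E {..<D} (\<lambda>l. {..n l}).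
       smul (\<Prod>l<D. \<Prod>k\<in>{..n l} - {j l}. inverse (X l (j l) - X l k)) (f (\<lambda>i. if i < D then X i (j i) else 0)))"

lemma fdd_DD: "fdd smul D n f x = DD smul D n (\<lambda>i j. x (pos n i j)) f"
  by (simp add: fdd_def DD_def sel_def)

lemma DD_cong:
  assumes "\<And>i j. i < D \<Longrightarrow> j \<le> n i \<Longrightarrow> X i j = Y i j"
  shows "DD smul D n X f = DD smul D n Y f"
  unfolding DD_def
proof (rule sum.cong[OF refl])
  fix j assume j: "j \<in> Pi\<^sub>E {..<D} (\<lambda>l. {..n l})"
  have a: "\<And>l. l < D \<Longrightarrow> j l \<le> n l" using j by auto
  have p: "(\<Prod>l<D. \<Prod>k\<in>{..n l} - {j l}. inverse (X l (j l) - X l k)) = (\<Prod>l<D. \<Prod>k\<in>{..n l} - {j l}. inverse (Y l (j l) - Y l k))"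
    by (intro prod.cong refl) (auto simp: assms a)
  have q: "(\<lambda>i. if i < D then X i (j i) else 0) = (\<lambda>i. if i < D then Y i (j i) else 0)"
    by (auto simp: assms a)
  show "smul (\<Prod>l<D. \<Prod>k\<in>{..n l} - {j l}. inverse (X l (j l) - X l k)) (f (\<lambda>i. if i < D then X i (j i) else 0)) =
        smul (\<Prod>l<D. \<Prod>k\<in>{..n l} - {j l}. inverse (Y l (j l) - Y l k)) (f (\<lambda>i. if i < D then Y i (j i) else 0))"
    by (simp only: p q)
qed

lemma fdd_flat: "fdd smul D n G (flat D n Y) = DD smul D n Y G"
  unfolding fdd_DD by (rule DD_cong) (simp add: flat_pos)




lemma pfa: fixes A B C :: "'k::field"
  assumes "A \<noteq> B" "A \<noteq> C" "B \<noteq> C"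
  shows "inverse(A-B)*inverse(B-C) + inverse(A-C)*inverse(C-B) = inverse(A-B)*inverse(A-C)"
proof -
  have a: "A - B \<noteq> 0" "A - C \<noteq> 0" "B - C \<noteq> 0" using assms by auto
  have e: "inverse (C - B) = - inverse (B - C)" by (metis inverse_minus_eq minus_diff_eq)
  show ?thesis unfolding e using a by (simp add: divide_simps)
qed

lemma pf:
  fixes x :: "nat \<Rightarrow> 'k::field"
  assumes "finite I" "I \<noteq> {}" "inj_on x I" "\<forall>i\<in>I. X \<noteq> x i"
  shows "(\<Prod>i\<in>I. inverse (X - x i)) = (\<Sum>i\<in>I. inverse (X - x i) * (\<Prod>k\<in>I-{i}. inverse (x i - x k)))"
  using assms
proof (induction I arbitrary: X rule: finite_ne_induct)
  case (singleton a) then show ?case by simp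
next
  case (insert c F)
  have injF: "inj_on x F" using insert by (auto simp: inj_on_def)
  have neq: "\<And>i. i \<in> F \<Longrightarrow> x c \<noteq> x i" using insert by (auto simp: inj_on_def)
  have IHc: "(\<Prod>i\<in>F. inverse (x c - x i)) = (\<Sum>i\<in>F. inverse (x c - x i) * (\<Prod>k\<in>F-{i}. inverse (x i - x k)))"
    using insert.IH[of "x c"] injF neq by auto
  have IHX: "(\<Prod>i\<in>F. inverse (X - x i)) = (\<Sum>i\<in>F. inverse (X - x i) * (\<Prod>k\<in>F-{i}. inverse (x i - x k)))"
    using insert.IH[of X] injF insert.prems by auto
  have rem: "\<And>i. i \<in> F \<Longrightarrow> insert c F - {i} = insert c (F - {i})" using insert by auto
  have "(\<Sum>i\<in>insert c F. inverse (X - x i) * (\<Prod>k\<in>insert c F-{i}. inverse (x i - x k)))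
     = inverse (X - x c) * (\<Prod>k\<in>F. inverse (x c - x k)) +
       (\<Sum>i\<in>F. inverse (X - x i) * (inverse (x i - x c) * (\<Prod>k\<in>F-{i}. inverse (x i - x k))))"
    using insert by (simp add: rem)
  also have "\<dots> = (\<Sum>i\<in>F. (inverse (X - x c) * inverse (x c - x i) + inverse (X - x i) * inverse (x i - x c)) * (\<Prod>k\<in>F-{i}. inverse (x i - x k)))"
    by (simp add: IHc sum_distrib_left sum.distrib[symmetric] algebra_simps)
  also have "\<dots> = (\<Sum>i\<in>F. inverse (X - x c) * (inverse (X - x i) * (\<Prod>k\<in>F-{i}. inverse (x i - x k))))"
  proof (rule sum.cong[OF refl])
    fix i assume i: "i \<in> F"
    have a: "X - x c \<noteq> 0" "X - x i \<noteq> 0" "x c - x i \<noteq> 0" "x i - x c \<noteq> 0"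
      using insert.prems neq[OF i] i by auto
    have "inverse (X - x c) * inverse (x c - x i) + inverse (X - x i) * inverse (x i - x c)
        = inverse (X - x c) * inverse (X - x i)"
      using pfa[of X "x c" "x i"] insert.prems neq[OF i] i by auto
    then show "(inverse (X - x c) * inverse (x c - x i) + inverse (X - x i) * inverse (x i - x c)) * (\<Prod>k\<in>F-{i}. inverse (x i - x k))
       = inverse (X - x c) * (inverse (X - x i) * (\<Prod>k\<in>F-{i}. inverse (x i - x k)))" by simp
  qed
  also have "\<dots> = (\<Prod>i\<in>insert c F. inverse (X - x i))"
    using insert by (simp add: IHX sum_distrib_left)
  finally show ?case by simp
qed

lemma zerosum:
  fixes x :: "nat \<Rightarrow> 'k::field"
  assumes "finite I" "c \<in> I" "I - {c} \<noteq> {}" "inj_on x I"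
  shows "(\<Sum>i\<in>I. (\<Prod>k\<in>I-{i}. inverse (x i - x k))) = 0"
proof -
  let ?F = "I - {c}"
  have I: "I = insert c ?F" using assms by auto
  have neq: "\<And>i. i \<in> ?F \<Longrightarrow> x c \<noteq> x i" using assms by (auto simp: inj_on_def)
  have P: "(\<Prod>i\<in>?F. inverse (x c - x i)) = (\<Sum>i\<in>?F. inverse (x c - x i) * (\<Prod>k\<in>?F-{i}. inverse (x i - x k)))"
    using pf[of ?F x "x c"] assms neq by (auto intro: inj_on_subset)
  have rem: "\<And>i. i \<in> ?F \<Longrightarrow> I - {i} = insert c (?F - {i})" using assms by auto
  have "(\<Sum>i\<in>I. (\<Prod>k\<in>I-{i}. inverse (x i - x k)))
      = (\<Prod>k\<in>?F. inverse (x c - x k)) + (\<Sum>i\<in>?F. inverse (x i - x c) * (\<Prod>k\<in>?F-{i}. inverse (x i - x k)))"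
    by (subst I, subst sum.insert) (use assms rem in auto)
  also have "(\<Sum>i\<in>?F. inverse (x i - x c) * (\<Prod>k\<in>?F-{i}. inverse (x i - x k)))
      = - (\<Sum>i\<in>?F. inverse (x c - x i) * (\<Prod>k\<in>?F-{i}. inverse (x i - x k)))"
  proof -
    have e: "\<And>i. inverse (x i - x c) = - inverse (x c - x i)" by (metis inverse_minus_eq minus_diff_eq)
    show ?thesis by (simp add: e sum_negf[symmetric])
  qed
  finally show ?thesis using P by simp
qed

lemma oneD_w:
  fixes x :: "nat \<Rightarrow> 'k::field"
  assumes "s \<le> n'"
  shows "(\<Prod>k\<in>{..n'}-{s}. inverse ((x (Suc s) - x 0) - (x (Suc k) - x 0))) * inverse (x (Suc s) - x 0)
       = (\<Prod>k\<in>{..Suc n'}-{Suc s}. inverse (x (Suc s) - x k))"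
proof -
  have "(\<Prod>k\<in>{..n'}-{s}. inverse ((x (Suc s) - x 0) - (x (Suc k) - x 0)))
      = (\<Prod>k\<in>{..n'}-{s}. inverse (x (Suc s) - x (Suc k)))" by simp
  also have "\<dots> = (\<Prod>k\<in>Suc ` ({..n'}-{s}). inverse (x (Suc s) - x k))"
    by (subst prod.reindex) auto
  finally have 1: "(\<Prod>k\<in>{..n'}-{s}. inverse ((x (Suc s) - x 0) - (x (Suc k) - x 0)))
      = (\<Prod>k\<in>Suc ` ({..n'}-{s}). inverse (x (Suc s) - x k))" .
  have 2: "{..Suc n'}-{Suc s} = insert 0 (Suc ` ({..n'}-{s}))"
    apply (rule set_eqI) subgoal for k by (cases k) auto done
  show ?thesis unfolding 1 2 by (subst prod.insert) (auto simp: mult.commute)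
qed

lemma oneD:
  fixes x :: "nat \<Rightarrow> 'k::field" and h :: "nat \<Rightarrow> 'f::ab_group_add"
  assumes vs: "vector_space smul" and inj: "inj_on x {..Suc n'}"
  shows "(\<Sum>m\<le>Suc n'. smul (c * (\<Prod>k\<in>{..Suc n'}-{m}. inverse (x m - x k))) (h m))
       = (\<Sum>s\<le>n'. smul (c * (\<Prod>k\<in>{..n'}-{s}. inverse ((x (Suc s) - x 0) - (x (Suc k) - x 0))))
             (smul (inverse (x (Suc s) - x 0)) (h (Suc s) - h 0)))"
proof -
  interpret V: vector_space smul by (rule vs)
  define w where "w m = (\<Prod>k\<in>{..Suc n'}-{m}. inverse (x m - x k))" for m
  have Z: "(\<Sum>m\<le>Suc n'. w m) = 0" unfolding w_def
    by (rule zerosum[where c=0]) (use inj in auto)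
  have Z2: "(\<Sum>s\<le>n'. w (Suc s)) = - w 0"
  proof -
    have "w 0 + (\<Sum>s\<le>n'. w (Suc s)) = 0" using Z unfolding sum.atMost_Suc_shift[of w n'] .
    then show ?thesis by (simp add: add_eq_0_iff)
  qed
  have "(\<Sum>s\<le>n'. smul (c * (\<Prod>k\<in>{..n'}-{s}. inverse ((x (Suc s) - x 0) - (x (Suc k) - x 0))))
             (smul (inverse (x (Suc s) - x 0)) (h (Suc s) - h 0)))
     = (\<Sum>s\<le>n'. smul (c * w (Suc s)) (h (Suc s)) - smul (c * w (Suc s)) (h 0))"
  proof (rule sum.cong[OF refl])
    fix s assume "s \<in> {..n'}"
    then have "(\<Prod>k\<in>{..n'}-{s}. inverse ((x (Suc s) - x 0) - (x (Suc k) - x 0))) * inverse (x (Suc s) - x 0) = w (Suc s)"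
      unfolding w_def by (intro oneD_w) auto
    then show "smul (c * (\<Prod>k\<in>{..n'}-{s}. inverse ((x (Suc s) - x 0) - (x (Suc k) - x 0))))
             (smul (inverse (x (Suc s) - x 0)) (h (Suc s) - h 0)) = smul (c * w (Suc s)) (h (Suc s)) - smul (c * w (Suc s)) (h 0)"
      by (simp add: V.scale_right_diff_distrib mult.assoc)
  qed
  also have "\<dots> = (\<Sum>s\<le>n'. smul (c * w (Suc s)) (h (Suc s))) - smul (c * (\<Sum>s\<le>n'. w (Suc s))) (h 0)"
    by (simp add: sum_subtractf V.scale_sum_left sum_distrib_left)
  also have "\<dots> = (\<Sum>m\<le>Suc n'. smul (c * w m) (h m))"
  proof -
    have e: "smul (c * (\<Sum>s\<le>n'. w (Suc s))) (h 0) = - smul (c * w 0) (h 0)"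
      unfolding Z2 by simp
    show ?thesis unfolding e sum.atMost_Suc_shift[of "\<lambda>m. smul (c * w m) (h m)" n'] by simp
  qed
  finally show ?thesis unfolding w_def by (rule sym)
qed




definition XB :: "nat \<Rightarrow> nat \<Rightarrow> 'k::field \<Rightarrow> (nat \<Rightarrow> nat \<Rightarrow> 'k) \<Rightarrow> nat \<Rightarrow> nat \<Rightarrow> 'k" where
  "XB d l c X i j = (if i < d then (if i = l then X l 0 else X i j)
      else if i < 2*d then (if i - d = l then c else 0) else X l (Suc j) - X l 0)"

definition bet :: "nat \<Rightarrow> nat \<Rightarrow> (nat \<Rightarrow> nat) \<Rightarrow> nat \<Rightarrow> nat" where
  "bet d l n i = (if i < d then (if i = l then 0 else n i) else if i = 2*d then n l - 1 else 0)"

definition PP :: "nat \<Rightarrow> (nat \<Rightarrow> nat \<Rightarrow> 'k::zero) \<Rightarrow> (nat \<Rightarrow> nat) \<Rightarrow> nat \<Rightarrow> 'k" where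
  "PP d X j = (\<lambda>i. if i < d then X i (j i) else 0)"

lemma pt:
  fixes X :: "nat \<Rightarrow> nat \<Rightarrow> 'k::field"
  assumes l: "l < d" and z: "z = (\<lambda>i. if i < 2*d+1 then XB d l 1 X i (j' i) else 0)"
  shows "xpart d z = PP d X (j'(l:=0))" "shifted d z = PP d X (j'(l:=Suc (j' (2*d))))"
    "z (2*d) = X l (Suc (j' (2*d))) - X l 0" "z \<in> Km (2*d+1)"
proof -
  show x: "xpart d z = PP d X (j'(l:=0))"
    by (rule ext) (use l in \<open>simp add: z xpart_def PP_def XB_def\<close>)
  show t: "z (2*d) = X l (Suc (j' (2*d))) - X l 0"
    using l by (simp add: z XB_def)
  have y: "ypart d z = (\<lambda>i. if i = l then 1 else 0)"
    using l by (auto simp: z ypart_def XB_def)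
  show "shifted d z = PP d X (j'(l:=Suc (j' (2*d))))"
    unfolding shifted_def x t y by (rule ext) (use l in \<open>auto simp: PP_def\<close>)
  show "z \<in> Km (2*d+1)" by (simp add: z Km_def)
qed

lemma absa_bet: assumes "l < d" "1 \<le> n l" shows "absa (2*d+1) (bet d l n) = absa d n - 1"
proof -
  have s: "{..<2*d+1} = insert (2*d) ({..<d} \<union> {d..<2*d})" by auto
  have "absa (2*d+1) (bet d l n) = bet d l n (2*d) + ((\<Sum>i<d. bet d l n i) + (\<Sum>i\<in>{d..<2*d}. bet d l n i))"
  proof -
    have u: "sum (bet d l n) ({..<d} \<union> {d..<2*d}) = sum (bet d l n) {..<d} + sum (bet d l n) {d..<2*d}"
      by (rule sum.union_disjoint) auto
    show ?thesis unfolding absa_def s by (simp add: u)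
  qed
  also have "(\<Sum>i\<in>{d..<2*d}. bet d l n i) = 0" by (simp add: bet_def)
  also have "bet d l n (2*d) = n l - 1" using assms by (simp add: bet_def)
  also have "(\<Sum>i<d. bet d l n i) = bet d l n l + (\<Sum>i\<in>{..<d}-{l}. bet d l n i)"
    using assms by (simp add: sum.remove)
  also have "(\<Sum>i\<in>{..<d}-{l}. bet d l n i) = (\<Sum>i\<in>{..<d}-{l}. n i)"
    by (rule sum.cong) (auto simp: bet_def)
  also have "bet d l n l = 0" using assms by (simp add: bet_def)
  finally have e1: "absa (2*d+1) (bet d l n) = n l - 1 + (\<Sum>i\<in>{..<d}-{l}. n i)" by simp
  have e2: "absa d n = n l + (\<Sum>i\<in>{..<d}-{l}. n i)"
    using assms by (simp add: absa_def sum.remove)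
  show ?thesis using e1 e2 assms by simp
qed

lemma PP_cong: "(\<And>i. i < d \<Longrightarrow> j i = j' i) \<Longrightarrow> PP d X j = PP d X j'"
  by (auto simp: PP_def)

definition emb :: "nat \<Rightarrow> (nat \<Rightarrow> nat) \<Rightarrow> nat \<Rightarrow> nat \<Rightarrow> nat" where
  "emb d j0 s = (\<lambda>i. if i < d then j0 i else if i < 2*d then 0 else if i = 2*d then s else undefined)"

lemma core:
  fixes X :: "nat \<Rightarrow> nat \<Rightarrow> 'k::field" and f :: "(nat \<Rightarrow> 'k) \<Rightarrow> 'f::ab_group_add"
  assumes vs: "vector_space smul" and l: "l < d" and nl: "n l = Suc n'"
    and inj: "inj_on (X l) {..n l}"
    and hU: "\<And>j. (\<forall>i<d. j i \<le> n i) \<Longrightarrow> PP d X j \<in> U"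
    and hG: "\<forall>z\<in>V1' d U. G z = dquot smul d f z"
  shows "DD smul (2*d+1) (bet d l n) (XB d l 1 X) G = DD smul d n X f"
proof -
  define A where "A = Pi\<^sub>E {..<d} (\<lambda>i. {..n i})"
  define A0 where "A0 = {j \<in> A. j l = 0}"
  define B where "B = Pi\<^sub>E {..<2*d+1} (\<lambda>i. {..bet d l n i})"
  define W where "W j0 = (\<Prod>i\<in>{..<d}-{l}. \<Prod>k\<in>{..n i}-{j0 i}. inverse (X i (j0 i) - X i k))" for j0
  define F where "F j = smul (\<Prod>i<d. \<Prod>k\<in>{..n i} - {j i}. inverse (X i (j i) - X i k)) (f (PP d X j))" for j
  define F' where "F' j = smul (\<Prod>i<2*d+1. \<Prod>k\<in>{..bet d l n i} - {j i}. inverse (XB d l 1 X i (j i) - XB d l 1 X i k))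
       (G (\<lambda>i. if i < 2*d+1 then XB d l 1 X i (j i) else 0))" for j
  have fin: "finite A0" "finite A" unfolding A0_def A_def by (auto intro!: finite_PiE)
  have dL: "DD smul d n X f = (\<Sum>j\<in>A. F j)"
    by (simp add: DD_def A_def F_def PP_def)
  have dR: "DD smul (2*d+1) (bet d l n) (XB d l 1 X) G = (\<Sum>j\<in>B. F' j)"
    by (simp add: DD_def B_def F'_def)
  have L1: "(\<Sum>j\<in>A. F j) = (\<Sum>(j0,m)\<in>A0 \<times> {..Suc n'}. F (j0(l:=m)))"
  proof (rule sum.reindex_bij_witness[where i="\<lambda>(j0,m). j0(l:=m)" and j="\<lambda>j. (j(l:=0), j l)"])
    fix a assume a: "a \<in> A"
    then have "a l \<le> n l" using l by (auto simp: A_def)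
    with a show "(a(l:=0), a l) \<in> A0 \<times> {..Suc n'}"
      using l nl by (auto simp: A0_def A_def PiE_def extensional_def)
  next
    fix b assume b: "b \<in> A0 \<times> {..Suc n'}"
    then show "(case b of (j0, m) \<Rightarrow> j0(l := m)) \<in> A"
      using l nl by (auto simp: A0_def A_def PiE_def extensional_def)
  qed (auto simp: A0_def)
  have L2: "(\<Sum>(j0,m)\<in>A0 \<times> {..Suc n'}. F (j0(l:=m))) = (\<Sum>j0\<in>A0. \<Sum>m\<le>Suc n'. F (j0(l:=m)))"
    by (rule sum.cartesian_product[symmetric])
  have L3: "F (j0(l:=m)) = smul (W j0 * (\<Prod>k\<in>{..Suc n'}-{m}. inverse (X l m - X l k))) (f (PP d X (j0(l:=m))))"
    if "j0 \<in> A0" for j0 m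
  proof -
    have "(\<Prod>i<d. \<Prod>k\<in>{..n i} - {(j0(l:=m)) i}. inverse (X i ((j0(l:=m)) i) - X i k))
        = (\<Prod>k\<in>{..n l} - {m}. inverse (X l m - X l k)) *
          (\<Prod>i\<in>{..<d}-{l}. \<Prod>k\<in>{..n i} - {(j0(l:=m)) i}. inverse (X i ((j0(l:=m)) i) - X i k))"
      using l by (subst prod.remove[of "{..<d}" l]) auto
    also have "(\<Prod>i\<in>{..<d}-{l}. \<Prod>k\<in>{..n i} - {(j0(l:=m)) i}. inverse (X i ((j0(l:=m)) i) - X i k)) = W j0"
      unfolding W_def by (rule prod.cong) auto
    finally show ?thesis unfolding F_def nl by (simp add: mult.commute)
  qed
  have embinv: "emb d (restrict a {..<d}) (a (2*d)) = a" if a: "a \<in> B" for a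
  proof -
    have a1: "\<And>i. i < 2*d+1 \<Longrightarrow> a i \<le> bet d l n i" and a2: "\<And>i. \<not> i < 2*d+1 \<Longrightarrow> a i = undefined"
      using a by (auto simp: B_def PiE_def extensional_def)
    show ?thesis
    proof (rule ext)
      fix i show "emb d (restrict a {..<d}) (a (2*d)) i = a i"
        using a1[of i] a2[of i] by (auto simp: emb_def bet_def)
    qed
  qed
  have R1: "(\<Sum>j\<in>B. F' j) = (\<Sum>(j0,s)\<in>A0 \<times> {..n'}. F' (emb d j0 s))"
  proof (rule sum.reindex_bij_witness[where i="\<lambda>(j0,s). emb d j0 s" and j="\<lambda>j. (restrict j {..<d}, j (2*d))"])
    fix a assume a: "a \<in> B"
    have a1: "\<And>i. i < 2*d+1 \<Longrightarrow> a i \<le> bet d l n i"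
      using a by (auto simp: B_def PiE_def extensional_def)
    show "(case (restrict a {..<d}, a (2*d)) of (j0, s) \<Rightarrow> emb d j0 s) = a"
      using embinv[OF a] by simp
    have "a l \<le> 0" using a1[of l] l by (simp add: bet_def)
    moreover have "a (2*d) \<le> n'" using a1[of "2*d"] l nl by (simp add: bet_def)
    moreover have "a i \<le> n i" if "i < d" for i
      using a1[of i] that by (cases "i = l") (auto simp: bet_def)
    ultimately show "(restrict a {..<d}, a (2*d)) \<in> A0 \<times> {..n'}"
      using l by (auto simp: A0_def A_def)
  next
    fix b assume b: "b \<in> A0 \<times> {..n'}"
    obtain j0 s where bb: "b = (j0, s)" by force
    have j0: "j0 \<in> A" "j0 l = 0" "s \<le> n'" using b bb by (auto simp: A0_def)
    have j0b: "\<And>i. i < d \<Longrightarrow> j0 i \<le> n i" "\<And>i. \<not> i < d \<Longrightarrow> j0 i = undefined"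
      using j0(1) by (auto simp: A_def PiE_def extensional_def)
    show "(restrict (case b of (j0, s) \<Rightarrow> emb d j0 s) {..<d}, (case b of (j0, s) \<Rightarrow> emb d j0 s) (2*d)) = b"
      unfolding bb using l j0b(2) by (auto simp: emb_def intro!: ext)
    show "(case b of (j0, s) \<Rightarrow> emb d j0 s) \<in> B"
      unfolding bb B_def using l j0 j0b nl by (auto simp: emb_def bet_def PiE_def extensional_def)
  qed (simp add: embinv)
  have R2: "(\<Sum>(j0,s)\<in>A0 \<times> {..n'}. F' (emb d j0 s)) = (\<Sum>j0\<in>A0. \<Sum>s\<le>n'. F' (emb d j0 s))"
    by (rule sum.cartesian_product[symmetric])
  have R3: "F' (emb d j0 s) = smul (W j0 * (\<Prod>k\<in>{..n'}-{s}. inverse ((X l (Suc s) - X l 0) - (X l (Suc k) - X l 0))))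
             (smul (inverse (X l (Suc s) - X l 0)) (f (PP d X (j0(l:=Suc s))) - f (PP d X (j0(l:=0)))))"
    if j0: "j0 \<in> A0" and s: "s \<le> n'" for j0 s
  proof -
    have j0A: "j0 \<in> A" "j0 l = 0" using j0 by (auto simp: A0_def)
    have j0b: "\<And>i. i < d \<Longrightarrow> j0 i \<le> n i"
      using j0A(1) by (auto simp: A_def PiE_def extensional_def)
    define e where "e = emb d j0 s"
    define z where "z = (\<lambda>i. if i < 2*d+1 then XB d l 1 X i (e i) else 0)"
    have e2: "e (2*d) = s" using l by (simp add: e_def emb_def)
    have c1: "PP d X (e(l:=0)) = PP d X (j0(l:=0))"
      by (rule PP_cong) (simp add: e_def emb_def)
    have c2: "PP d X (e(l:=Suc s)) = PP d X (j0(l:=Suc s))"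
      by (rule PP_cong) (simp add: e_def emb_def)
    have px: "xpart d z = PP d X (j0(l:=0))"
      using pt(1)[OF l z_def] c1 by simp
    have ps: "shifted d z = PP d X (j0(l:=Suc s))"
      using pt(2)[OF l z_def] c2 e2 by simp
    have pz: "z (2*d) = X l (Suc s) - X l 0" using pt(3)[OF l z_def] e2 by simp
    have zK: "z \<in> Km (2*d+1)" using pt(4)[OF l z_def] .
    have ne: "X l (Suc s) \<noteq> X l 0"
    proof
      assume "X l (Suc s) = X l 0"
      then have "Suc s = 0" using inj s nl by (auto simp: inj_on_def)
      then show False by simp
    qed
    have u1: "xpart d z \<in> U" unfolding px
      by (rule hU) (use j0b in auto)
    have u2: "shifted d z \<in> U" unfolding ps
      by (rule hU) (use j0b s nl in auto)
    have "z \<in> V1' d U"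
      unfolding V1'_def V1_def using zK u1 u2 pz ne by simp
    then have Gz: "G z = smul (inverse (X l (Suc s) - X l 0)) (f (PP d X (j0(l:=Suc s))) - f (PP d X (j0(l:=0))))"
      using hG px ps pz by (simp add: dquot_def)
    have s2: "{..<2*d+1} = insert (2*d) ({..<d} \<union> {d..<2*d})" by auto
    define g where "g i = (\<Prod>k\<in>{..bet d l n i} - {e i}. inverse (XB d l 1 X i (e i) - XB d l 1 X i k))" for i
    have "(\<Prod>i<2*d+1. g i) = g (2*d) * ((\<Prod>i<d. g i) * (\<Prod>i\<in>{d..<2*d}. g i))"
      unfolding s2 by (subst prod.insert; (subst prod.union_disjoint)?) auto
    also have "(\<Prod>i\<in>{d..<2*d}. g i) = 1"
      by (rule prod.neutral) (auto simp: g_def bet_def e_def emb_def)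
    also have "(\<Prod>i<d. g i) = g l * (\<Prod>i\<in>{..<d}-{l}. g i)"
      using l by (subst prod.remove[of "{..<d}" l]) auto
    also have "g l = 1" using l j0A by (simp add: g_def bet_def e_def emb_def)
    also have "(\<Prod>i\<in>{..<d}-{l}. g i) = W j0"
      unfolding W_def g_def by (rule prod.cong) (auto simp: bet_def e_def emb_def XB_def)
    also have "g (2*d) = (\<Prod>k\<in>{..n'}-{s}. inverse ((X l (Suc s) - X l 0) - (X l (Suc k) - X l 0)))"
      unfolding g_def using l nl e2 by (simp add: bet_def XB_def)
    finally have wt: "(\<Prod>i<2*d+1. g i) = W j0 * (\<Prod>k\<in>{..n'}-{s}. inverse ((X l (Suc s) - X l 0) - (X l (Suc k) - X l 0)))"
      by (simp add: mult.commute)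
    show ?thesis unfolding F'_def e_def[symmetric] z_def[symmetric] Gz
      using wt by (simp add: g_def)
  qed
  have "DD smul d n X f = (\<Sum>j0\<in>A0. \<Sum>m\<le>Suc n'. smul (W j0 * (\<Prod>k\<in>{..Suc n'}-{m}. inverse (X l m - X l k))) (f (PP d X (j0(l:=m)))))"
    unfolding dL L1 L2 by (rule sum.cong[OF refl], rule sum.cong[OF refl], rule L3) auto
  also have "\<dots> = (\<Sum>j0\<in>A0. \<Sum>s\<le>n'. smul (W j0 * (\<Prod>k\<in>{..n'}-{s}. inverse ((X l (Suc s) - X l 0) - (X l (Suc k) - X l 0))))
             (smul (inverse (X l (Suc s) - X l 0)) (f (PP d X (j0(l:=Suc s))) - f (PP d X (j0(l:=0))))))"
  proof (rule sum.cong[OF refl])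
    fix j0 assume "j0 \<in> A0"
    have injl: "inj_on (X l) {..Suc n'}" using inj nl by simp
    show "(\<Sum>m\<le>Suc n'. smul (W j0 * (\<Prod>k\<in>{..Suc n'}-{m}. inverse (X l m - X l k))) (f (PP d X (j0(l:=m)))))
      = (\<Sum>s\<le>n'. smul (W j0 * (\<Prod>k\<in>{..n'}-{s}. inverse ((X l (Suc s) - X l 0) - (X l (Suc k) - X l 0))))
             (smul (inverse (X l (Suc s) - X l 0)) (f (PP d X (j0(l:=Suc s))) - f (PP d X (j0(l:=0))))))"
      by (rule oneD[OF vs injl, where h="\<lambda>m. f (PP d X (j0(l:=m)))" and c="W j0"])
  qed
  also have "\<dots> = DD smul (2*d+1) (bet d l n) (XB d l 1 X) G"
    unfolding dR R1 R2 by (rule sum.cong[OF refl], rule sum.cong[OF refl], rule R3[symmetric]) auto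
  finally show ?thesis by (rule sym)
qed




definition Xf :: "(nat \<Rightarrow> nat) \<Rightarrow> (nat \<Rightarrow> 'k) \<Rightarrow> nat \<Rightarrow> nat \<Rightarrow> 'k" where
  "Xf n x = (\<lambda>i j. x (pos n i j))"

definition Psi :: "nat \<Rightarrow> nat \<Rightarrow> (nat \<Rightarrow> nat) \<Rightarrow> 'k::field \<Rightarrow> (nat \<Rightarrow> 'k) \<Rightarrow> nat \<Rightarrow> 'k" where
  "Psi d l n c x = flat (2*d+1) (bet d l n) (XB d l c (Xf n x))"

lemma cont_diff:
  fixes g h :: "'a::topological_space \<Rightarrow> 'k::{field,t2_space,perfect_space}"
  assumes tf: "top_field TYPE('k)" and g: "continuous_on S g" and h: "continuous_on S h"
  shows "continuous_on S (\<lambda>x. g x - h x)"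
proof -
  have add: "continuous_on UNIV (\<lambda>p::'k\<times>'k. fst p + snd p)" and neg: "continuous_on UNIV (\<lambda>x::'k. - x)"
    using tf by (auto simp: top_field_def)
  have "continuous_on S (\<lambda>x. - h x)" by (rule continuous_on_compose2[OF neg h]) auto
  then have "continuous_on S (\<lambda>x. (g x, - h x))" by (intro continuous_on_Pair g)
  then have "continuous_on S (\<lambda>x. fst (g x, - h x) + snd (g x, - h x))"
    by (rule continuous_on_compose2[OF add]) auto
  then show ?thesis by simp
qed

lemma Psi_cont:
  assumes tf: "top_field TYPE('k::{field,t2_space,perfect_space})"
  shows "continuous_on UNIV (Psi d l n (c::'k))"
proof (rule continuous_on_coordinatewise_then_product)
  fix p
  have pr: "continuous_on UNIV (\<lambda>x::nat\<Rightarrow>'k. x q)" for q by simp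
  have pd: "continuous_on UNIV (\<lambda>x::nat\<Rightarrow>'k. x q - x r)" for q r
    by (rule cont_diff[OF tf pr pr])
  define b where "b = blk (bet d l n) p"
  define r where "r = p - SP (bet d l n) b"
  have e: "(\<lambda>x. Psi d l n c x p) = (\<lambda>x. if b < 2*d+1 then XB d l c (Xf n x) b r else 0)"
    unfolding b_def r_def Psi_def flat_def by simp
  show "continuous_on UNIV (\<lambda>x. Psi d l n c x p)" unfolding e
    by (cases "b < 2*d+1"; cases "b < d"; cases "b = l"; cases "b < 2*d"; cases "b - d = l")
       (simp_all add: XB_def Xf_def pr pd)
qed

lemma Psi_diff: "(\<lambda>p. Psi d l n 1 y p - Psi d l n 1 x p) = Psi d l n 0 (\<lambda>q. y q - x q)"
  for x y :: "nat \<Rightarrow> 'k::field"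
  by (rule ext) (simp add: Psi_def flat_def XB_def Xf_def algebra_simps)

lemma Psi_scale: "Psi d l n 0 (\<lambda>q. t * v q) = (\<lambda>p. t * Psi d l n 0 v p)"
  for v :: "nat \<Rightarrow> 'k::field"
  by (rule ext) (simp add: Psi_def flat_def XB_def Xf_def algebra_simps)

lemma Psi_Km: "Psi d l n c v \<in> Km (2*d+1 + absa (2*d+1) (bet d l n))"
  unfolding Psi_def by (rule flat_Km)

lemma sel_Psi:
  assumes "\<forall>i<2*d+1. j' i \<le> bet d l n i"
  shows "sel (2*d+1) (bet d l n) (Psi d l n c x) j' = (\<lambda>i. if i < 2*d+1 then XB d l c (Xf n x) i (j' i) else 0)"
  using assms by (auto simp: sel_def Psi_def flat_pos)

lemma sel_PP: "sel d n x j = PP d (Xf n x) j"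
  by (simp add: sel_def PP_def Xf_def)

lemma Psi_Ualpha:
  assumes l: "l < d" and a: "1 \<le> n l" and x: "x \<in> Ualpha d n U"
  shows "Psi d l n 1 x \<in> Ualpha (2*d+1) (bet d l n) (V1 d U)"
proof -
  have hU: "PP d (Xf n x) j \<in> U" if "\<forall>i<d. j i \<le> n i" for j
    using x that by (auto simp: Ualpha_def sel_PP)
  have "sel (2*d+1) (bet d l n) (Psi d l n 1 x) j' \<in> V1 d U" if j': "\<forall>i<2*d+1. j' i \<le> bet d l n i" for j'
  proof -
    define z where "z = (\<lambda>i. if i < 2*d+1 then XB d l 1 (Xf n x) i (j' i) else 0)"
    have sz: "sel (2*d+1) (bet d l n) (Psi d l n 1 x) j' = z" unfolding z_def by (rule sel_Psi[OF j'])
    have b1: "(j'(l:=0)) i \<le> n i" if "i < d" for i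
      using j'[rule_format, of i] that by (auto simp: bet_def)
    have b2: "(j'(l:=Suc (j' (2*d)))) i \<le> n i" if "i < d" for i
      using j'[rule_format, of i] j'[rule_format, of "2*d"] that l a by (auto simp: bet_def)
    have "xpart d z \<in> U" unfolding pt(1)[OF l z_def] using b1 by (intro hU) auto
    moreover have "shifted d z \<in> U" unfolding pt(2)[OF l z_def] using b2 by (intro hU) auto
    ultimately show ?thesis unfolding sz V1_def using pt(4)[OF l z_def] by simp
  qed
  then show ?thesis unfolding Ualpha_def using Psi_Km by auto
qed

lemma Psi_Ualpha':
  assumes l: "l < d" and a: "1 \<le> n l" and x: "x \<in> Ualpha' d n U"
  shows "Psi d l n 1 x \<in> Ualpha' (2*d+1) (bet d l n) (V1 d U)"
proof -
  have xU: "x \<in> Ualpha d n U" using x by (simp add: Ualpha'_def)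
  have dis: "\<And>i j k. i < d \<Longrightarrow> j \<le> n i \<Longrightarrow> k \<le> n i \<Longrightarrow> j \<noteq> k \<Longrightarrow> x (pos n i j) \<noteq> x (pos n i k)"
    using x by (auto simp: Ualpha'_def)
  have "Psi d l n 1 x (pos (bet d l n) i j) \<noteq> Psi d l n 1 x (pos (bet d l n) i k)"
    if i: "i < 2*d+1" and j: "j \<le> bet d l n i" and k: "k \<le> bet d l n i" and jk: "j \<noteq> k" for i j k
  proof -
    have e: "Psi d l n 1 x (pos (bet d l n) i m) = XB d l 1 (Xf n x) i m" if "m \<le> bet d l n i" for m
      using i that by (simp add: Psi_def flat_pos)
    show ?thesis
    proof (cases "i < d")
      case True
      then show ?thesis using j k jk e[OF j] e[OF k] dis[of i j k]
        by (cases "i = l") (auto simp: bet_def XB_def Xf_def)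
    next
      case False
      show ?thesis
      proof (cases "i = 2*d")
        case True
        have "Suc j \<le> n l" "Suc k \<le> n l" using j k True l a by (auto simp: bet_def)
        then have "x (pos n l (Suc j)) \<noteq> x (pos n l (Suc k))" using dis[of l "Suc j" "Suc k"] l jk by auto
        then show ?thesis using e[OF j] e[OF k] True False by (simp add: XB_def Xf_def)
      next
        case False2: False
        then show ?thesis using j k jk False by (auto simp: bet_def)
      qed
    qed
  qed
  then show ?thesis using Psi_Ualpha[OF l a xU] by (auto simp: Ualpha'_def)
qed

lemma Psi_fdd:
  fixes f :: "(nat \<Rightarrow> 'k::field) \<Rightarrow> 'f::ab_group_add"
  assumes vs: "vector_space smul" and l: "l < d" and a: "1 \<le> n l"
    and hG: "\<forall>z\<in>V1' d U. G z = dquot smul d f z" and x: "x \<in> Ualpha' d n U"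
  shows "fdd smul (2*d+1) (bet d l n) G (Psi d l n 1 x) = fdd smul d n f x"
proof -
  obtain n' where nl: "n l = Suc n'" using a by (cases "n l") auto
  have inj: "inj_on (Xf n x l) {..n l}"
    using x l by (auto simp: Ualpha'_def inj_on_def Xf_def)
  have hU: "PP d (Xf n x) j \<in> U" if "\<forall>i<d. j i \<le> n i" for j
    using x that by (auto simp: Ualpha'_def Ualpha_def sel_PP)
  have "fdd smul (2*d+1) (bet d l n) G (Psi d l n 1 x) = DD smul (2*d+1) (bet d l n) (XB d l 1 (Xf n x)) G"
    unfolding Psi_def by (rule fdd_flat)
  also have "\<dots> = DD smul d n (Xf n x) f"
    by (rule core[where X="Xf n x" and n=n and l=l and n'=n' and d=d, OF vs l nl inj _ hG]) (use hU in auto)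
  also have "\<dots> = fdd smul d n f x" by (simp add: fdd_DD Xf_def)
  finally show ?thesis .
qed




lemma holder_subset:
  assumes h: "holder av smul \<sigma> m V g" and s: "V' \<subseteq> V"
  shows "holder av smul \<sigma> m V' g"
  unfolding holder_def
proof (intro ballI allI impI)
  fix x0 q assume x0: "x0 \<in> V'" and q: "gaugeF av smul q"
  have "x0 \<in> V" using x0 s by auto
  then obtain p W where pW: "gaugeE av m p" "open W" "x0 \<in> W"
    and ineq: "\<forall>x\<in>V \<inter> W. \<forall>y\<in>V \<inter> W. q (g y - g x) \<le> p (\<lambda>i. y i - x i) powr \<sigma>"
    using h q unfolding holder_def by blast
  have "\<forall>x\<in>V' \<inter> W. \<forall>y\<in>V' \<inter> W. q (g y - g x) \<le> p (\<lambda>i. y i - x i) powr \<sigma>"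
    using ineq s by blast
  then show "\<exists>p W. gaugeE av m p \<and> open W \<and> x0 \<in> W \<and>
       (\<forall>x\<in>V' \<inter> W. \<forall>y\<in>V' \<inter> W. q (g y - g x) \<le> p (\<lambda>i. y i - x i) powr \<sigma>)"
    using pW by blast
qed

lemma holder_comp:
  fixes Phi L :: "(nat \<Rightarrow> 'k::{field,topological_space}) \<Rightarrow> nat \<Rightarrow> 'k"
  assumes H: "holder av smul \<sigma> m' V' H"
    and Phi: "continuous_on UNIV Phi" and L: "continuous_on UNIV L"
    and dif: "\<And>x y. (\<lambda>i. Phi y i - Phi x i) = L (\<lambda>i. y i - x i)"
    and sc: "\<And>t v. L (\<lambda>i. t * v i) = (\<lambda>i. t * L v i)"
    and LK: "\<And>v. L v \<in> Km m'"
    and img: "Phi ` V \<subseteq> V'"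
  shows "holder av smul \<sigma> m V (\<lambda>x. H (Phi x))"
  unfolding holder_def
proof (intro ballI allI impI)
  fix x0 q assume x0: "x0 \<in> V" and q: "gaugeF av smul q"
  have "Phi x0 \<in> V'" using img x0 by auto
  then obtain p W where p: "gaugeE av m' p" and W: "open W" "Phi x0 \<in> W"
    and ineq: "\<forall>x\<in>V' \<inter> W. \<forall>y\<in>V' \<inter> W. q (H y - H x) \<le> p (\<lambda>i. y i - x i) powr \<sigma>"
    using H q unfolding holder_def by blast
  have ov: "open (f -` B)" if "continuous_on UNIV f" "open B" for f :: "(nat \<Rightarrow> 'k) \<Rightarrow> nat \<Rightarrow> 'k" and B
    using continuous_on_open_vimage[of UNIV f] that by auto
  have L0: "L (\<lambda>_. 0) = (\<lambda>_. 0)" using sc[of 0 "\<lambda>_. 0"] by simp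
  have gE: "gaugeE av m (\<lambda>v. p (L v))"
    unfolding gaugeE_def
  proof (intro conjI ballI allI impI)
    fix x :: "nat \<Rightarrow> 'k" assume "x \<in> Km m"
    show "0 \<le> p (L x)" using p LK unfolding gaugeE_def by blast
    fix t show "p (L (\<lambda>i. t * x i)) = av t * p (L x)"
      using p LK unfolding gaugeE_def sc by blast
  next
    fix r :: real assume r: "r > 0"
    then obtain N where N: "open N" "(\<lambda>_. 0) \<in> N" "N \<inter> Km m' \<subseteq> {x. p x < r}"
      using p unfolding gaugeE_def by blast
    show "\<exists>N. open N \<and> (\<lambda>_. 0) \<in> N \<and> N \<inter> Km m \<subseteq> {x. p (L x) < r}"
    proof (intro exI conjI)
      show "open (L -` N)" by (rule ov[OF L N(1)])
      show "(\<lambda>_. 0) \<in> L -` N" using N(2) L0 by simp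
      show "L -` N \<inter> Km m \<subseteq> {x. p (L x) < r}" using N(3) LK by auto
    qed
  qed
  show "\<exists>p W. gaugeE av m p \<and> open W \<and> x0 \<in> W \<and>
           (\<forall>x\<in>V \<inter> W. \<forall>y\<in>V \<inter> W. q (H (Phi y) - H (Phi x)) \<le> p (\<lambda>i. y i - x i) powr \<sigma>)"
  proof (intro exI conjI)
    show "gaugeE av m (\<lambda>v. p (L v))" by (rule gE)
    show "open (Phi -` W)" by (rule ov[OF Phi W(1)])
    show "x0 \<in> Phi -` W" using W(2) by simp
    show "\<forall>x\<in>V \<inter> Phi -` W. \<forall>y\<in>V \<inter> Phi -` W. q (H (Phi y) - H (Phi x)) \<le> p (L (\<lambda>i. y i - x i)) powr \<sigma>"
    proof (intro ballI)
      fix x y assume x: "x \<in> V \<inter> Phi -` W" and y: "y \<in> V \<inter> Phi -` W"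
      have "Phi x \<in> V' \<inter> W" "Phi y \<in> V' \<inter> W" using x y img by auto
      then have "q (H (Phi y) - H (Phi x)) \<le> p (\<lambda>i. Phi y i - Phi x i) powr \<sigma>" using ineq by blast
      then show "q (H (Phi y) - H (Phi x)) \<le> p (L (\<lambda>i. y i - x i)) powr \<sigma>" by (simp only: dif)
    qed
  qed
qed

lemma absa0: "absa d n = 0 \<Longrightarrow> i < d \<Longrightarrow> n i = 0"
  by (simp add: absa_def)

lemma pos0: assumes "absa d n = 0" "i < d" shows "pos n i 0 = i"
proof -
  have "pos n i 0 = (\<Sum>k<i. Suc (n k))" by (simp add: pos_def)
  also have "\<dots> = (\<Sum>k<i. 1)" using assms by (intro sum.cong) (auto simp: absa0)
  finally show ?thesis by simp
qed

lemma sel0: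
  assumes a: "absa d n = 0" and x: "x \<in> Km d" and j: "\<forall>i<d. j i \<le> n i"
  shows "sel d n x j = x"
proof (rule ext)
  fix i show "sel d n x j i = x i"
  proof (cases "i < d")
    case True
    then have "j i = 0" using j absa0[OF a True] by auto
    then show ?thesis using True pos0[OF a True] by (simp add: sel_def)
  next
    case False
    then show ?thesis using x by (simp add: sel_def Km_def)
  qed
qed

lemma Ualpha0: assumes a: "absa d n = 0" shows "Ualpha d n U = U \<inter> Km d"
proof (rule set_eqI, rule iffI)
  fix x assume xa: "x \<in> Ualpha d n U"
  have x: "x \<in> Km d" using xa a by (simp add: Ualpha_def)
  have "sel d n x (\<lambda>_. 0) \<in> U" using xa by (simp add: Ualpha_def)
  then show "x \<in> U \<inter> Km d" using sel0[OF a x] x by simp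
next
  fix x assume xx: "x \<in> U \<inter> Km d"
  show "x \<in> Ualpha d n U"
    unfolding Ualpha_def
  proof (intro CollectI conjI allI impI)
    show "x \<in> Km (d + absa d n)" using xx a by simp
    fix j assume jj: "\<forall>l<d. j l \<le> n l"
    have "sel d n x j = x" using xx jj by (intro sel0[OF a]) auto
    then show "sel d n x j \<in> U" using xx by simp
  qed
qed

lemma fdd0:
  assumes vs: "vector_space smul" and a: "absa d n = 0" and x: "x \<in> Km d"
  shows "fdd smul d n f x = f x"
proof -
  interpret V: vector_space smul by (rule vs)
  define j0 where "j0 = restrict (\<lambda>_. (0::nat)) {..<d}"
  have P: "Pi\<^sub>E {..<d} (\<lambda>l. {..n l}) = {j0}"
  proof -
    have "Pi\<^sub>E {..<d} (\<lambda>l. {..n l}) = Pi\<^sub>E {..<d} (\<lambda>l. {j0 l})"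
      using a by (intro PiE_cong) (auto simp: absa0 j0_def)
    also have "\<dots> = {j0}" by (rule PiE_singleton) (auto simp: j0_def extensional_def)
    finally show ?thesis .
  qed
  have s: "sel d n x j0 = x"
    using x a by (auto simp: sel_def pos0 j0_def Km_def intro!: ext)
  have pr: "(\<Prod>l<d. \<Prod>k\<in>{..n l} - {j0 l}. inverse (x (pos n l (j0 l)) - x (pos n l k))) = 1"
    using a by (intro prod.neutral ballI) (auto simp: absa0 j0_def)
  show ?thesis unfolding fdd_def P using s pr by simp
qed

lemma base:
  assumes vs: "vector_space smul" and a: "absa d n = 0" and c: "continuous_on U f"
  shows "continuous_on (Ualpha d n U) f \<and> (\<forall>x\<in>Ualpha' d n U. f x = fdd smul d n f x)"
proof
  show "continuous_on (Ualpha d n U) f" unfolding Ualpha0[OF a] by (rule continuous_on_subset[OF c]) auto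
  show "\<forall>x\<in>Ualpha' d n U. f x = fdd smul d n f x"
  proof
    fix x assume "x \<in> Ualpha' d n U"
    then have "x \<in> Km d" using a by (auto simp: Ualpha'_def Ualpha_def)
    then show "f x = fdd smul d n f x" using fdd0[OF vs a] by simp
  qed
qed

lemma absa_pos: "absa d n \<noteq> 0 \<Longrightarrow> \<exists>l<d. 1 \<le> n l"
  by (auto simp: absa_def)

lemma BGN_cont: "BGN smul k m V g \<Longrightarrow> continuous_on V g"
  by (cases k) auto

lemma BGNH_cont: "BGNH av smul \<sigma> k m V g \<Longrightarrow> continuous_on V g \<and> holder av smul \<sigma> m V g"
  by (cases k) auto

lemma mainB:
  assumes tf: "top_field TYPE('k::{field,t2_space,perfect_space})" and vs: "vector_space (smul :: 'k \<Rightarrow> 'f::{ab_group_add,t2_space} \<Rightarrow> 'f)"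
  shows "BGN smul k d U f \<Longrightarrow> absa d n \<le> k \<Longrightarrow>
    \<exists>G. continuous_on (Ualpha d n U) G \<and> (\<forall>x\<in>Ualpha' d n U. G x = fdd smul d n f x)"
proof (induction k arbitrary: d U f n)
  case 0
  then show ?case using base[OF vs _ BGN_cont[OF "0.prems"(1)]] by blast
next
  case (Suc k)
  show ?case
  proof (cases "absa d n = 0")
    case True
    then show ?thesis using base[OF vs _ BGN_cont[OF Suc.prems(1)]] by blast
  next
    case False
    then obtain l where l: "l < d" "1 \<le> n l" using absa_pos by blast
    obtain G1 where G1: "\<forall>z\<in>V1' d U. G1 z = dquot smul d f z" "BGN smul k (2*d+1) (V1 d U) G1"
      using Suc.prems(1) by auto
    have ab: "absa (2*d+1) (bet d l n) \<le> k" using absa_bet[of l d n, OF l] Suc.prems(2) by simp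
    obtain Gb where Gb: "continuous_on (Ualpha (2*d+1) (bet d l n) (V1 d U)) Gb"
      "\<forall>x\<in>Ualpha' (2*d+1) (bet d l n) (V1 d U). Gb x = fdd smul (2*d+1) (bet d l n) G1 x"
      using Suc.IH[OF G1(2) ab] by blast
    show ?thesis
    proof (intro exI conjI ballI)
      show "continuous_on (Ualpha d n U) (\<lambda>x. Gb (Psi d l n 1 x))"
        by (rule continuous_on_compose2[OF Gb(1) continuous_on_subset[OF Psi_cont[OF tf]]])
           (use Psi_Ualpha[where l=l and d=d and n=n, OF l] in auto)
      fix x assume x: "x \<in> Ualpha' d n U"
      have "Gb (Psi d l n 1 x) = fdd smul (2*d+1) (bet d l n) G1 (Psi d l n 1 x)"
        using Gb(2) Psi_Ualpha'[where l=l and d=d and n=n, OF l x] by blast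
      also have "\<dots> = fdd smul d n f x" by (rule Psi_fdd[where l=l and d=d and n=n, OF vs l G1(1) x])
      finally show "Gb (Psi d l n 1 x) = fdd smul d n f x" .
    qed
  qed
qed

lemma mainH:
  assumes tf: "top_field TYPE('k::{field,t2_space,perfect_space})" and vs: "vector_space (smul :: 'k \<Rightarrow> 'f::{ab_group_add,t2_space} \<Rightarrow> 'f)"
  shows "BGNH av smul \<sigma> k d U f \<Longrightarrow> absa d n \<le> k \<Longrightarrow>
    \<exists>G. continuous_on (Ualpha d n U) G \<and> (\<forall>x\<in>Ualpha' d n U. G x = fdd smul d n f x)
        \<and> holder av smul \<sigma> (d + absa d n) (Ualpha d n U) G"
proof (induction k arbitrary: d U f n)
  case 0
  have "holder av smul \<sigma> (d + absa d n) (Ualpha d n U) f"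
    using BGNH_cont[OF "0.prems"(1)] "0.prems"(2) Ualpha0[of d n U] by (auto intro: holder_subset)
  then show ?case using base[OF vs _ conjunct1[OF BGNH_cont[OF "0.prems"(1)]]] "0.prems"(2) by blast
next
  case (Suc k)
  show ?case
  proof (cases "absa d n = 0")
    case True
    have "holder av smul \<sigma> (d + absa d n) (Ualpha d n U) f"
      using BGNH_cont[OF Suc.prems(1)] True Ualpha0[of d n U] by (auto intro: holder_subset)
    then show ?thesis using True base[OF vs _ conjunct1[OF BGNH_cont[OF Suc.prems(1)]]] by blast
  next
    case False
    then obtain l where l: "l < d" "1 \<le> n l" using absa_pos by blast
    obtain G1 where G1: "\<forall>z\<in>V1' d U. G1 z = dquot smul d f z" "BGNH av smul \<sigma> k (2*d+1) (V1 d U) G1"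
      using Suc.prems(1) by auto
    have ab: "absa (2*d+1) (bet d l n) \<le> k" using absa_bet[of l d n, OF l] Suc.prems(2) by simp
    obtain Gb where Gb: "continuous_on (Ualpha (2*d+1) (bet d l n) (V1 d U)) Gb"
      "\<forall>x\<in>Ualpha' (2*d+1) (bet d l n) (V1 d U). Gb x = fdd smul (2*d+1) (bet d l n) G1 x"
      "holder av smul \<sigma> (2*d+1 + absa (2*d+1) (bet d l n)) (Ualpha (2*d+1) (bet d l n) (V1 d U)) Gb"
      using Suc.IH[OF G1(2) ab] by blast
    show ?thesis
    proof (intro exI conjI ballI)
      show "continuous_on (Ualpha d n U) (\<lambda>x. Gb (Psi d l n 1 x))"
        by (rule continuous_on_compose2[OF Gb(1) continuous_on_subset[OF Psi_cont[OF tf]]])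
           (use Psi_Ualpha[where l=l and d=d and n=n, OF l] in auto)
      show "holder av smul \<sigma> (d + absa d n) (Ualpha d n U) (\<lambda>x. Gb (Psi d l n 1 x))"
        by (rule holder_comp[OF Gb(3) Psi_cont[OF tf] Psi_cont[OF tf] Psi_diff Psi_scale Psi_Km])
           (use Psi_Ualpha[where l=l and d=d and n=n, OF l] in auto)
      fix x assume x: "x \<in> Ualpha' d n U"
      have "Gb (Psi d l n 1 x) = fdd smul (2*d+1) (bet d l n) G1 (Psi d l n 1 x)"
        using Gb(2) Psi_Ualpha'[where l=l and d=d and n=n, OF l x] by blast
      also have "\<dots> = fdd smul d n f x" by (rule Psi_fdd[where l=l and d=d and n=n, OF vs l G1(1) x])
      finally show "Gb (Psi d l n 1 x) = fdd smul d n f x" .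
    qed
  qed
qed

theorem lemma2p3:
  fixes smul :: "'k::{field,t2_space,perfect_space} \<Rightarrow> 'f::{ab_group_add,t2_space} \<Rightarrow> 'f"
    and d k :: nat
    and U :: "(nat \<Rightarrow> 'k) set"
    and f :: "(nat \<Rightarrow> 'k) \<Rightarrow> 'f"
  assumes "top_field TYPE('k)"
    and "tvs smul"
    and "d \<ge> 1"
    and "admissible_dom d U"
  shows "(BGN smul k d U f \<longrightarrow> SDS smul k d U f) \<and>
         (\<forall>av \<sigma>. valued_field av \<and> \<sigma> > 0 \<and> BGNH av smul \<sigma> k d U f \<longrightarrow> SDSH av smul \<sigma> k d U f)"
proof (intro conjI impI allI)
  have vs: "vector_space smul" using assms(2) by (simp add: tvs_def)
  show "SDS smul k d U f" if b: "BGN smul k d U f"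
    unfolding SDS_def
  proof (intro conjI allI impI)
    show "continuous_on U f" by (rule BGN_cont[OF b])
    fix n assume "1 \<le> absa d n \<and> absa d n \<le> k"
    then have "absa d n \<le> k" by simp
    then show "\<exists>G. continuous_on (Ualpha d n U) G \<and> (\<forall>x\<in>Ualpha' d n U. G x = fdd smul d n f x)"
      by (rule mainB[OF assms(1) vs b])
  qed
  fix av \<sigma>
  assume h: "valued_field av \<and> \<sigma> > 0 \<and> BGNH av smul \<sigma> k d U f"
  then have b: "BGNH av smul \<sigma> k d U f" by simp
  show "SDSH av smul \<sigma> k d U f"
    unfolding SDSH_def
  proof (intro conjI allI impI)
    show "continuous_on U f" using BGNH_cont[OF b] by simp
    show "holder av smul \<sigma> d U f" using BGNH_cont[OF b] by simp
    fix n assume "1 \<le> absa d n \<and> absa d n \<le> k"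
    then have "absa d n \<le> k" by simp
    then show "\<exists>G. continuous_on (Ualpha d n U) G \<and> (\<forall>x\<in>Ualpha' d n U. G x = fdd smul d n f x) \<and>
             holder av smul \<sigma> (d + absa d n) (Ualpha d n U) G"
      by (rule mainH[OF assms(1) vs b])
  qed
qed


end
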